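(* Let $\mathbb{0}=\{x\in\omega^\omega : x(n)=0 \text{ for all but finitely many } n\}$. Then every maximal antichain of $(\omega^\omega\setminus\mathbb{0},\le^* )$ has size $\mathfrak{c}$; i.e. $\mathfrak{mac}(\omega^\omega\setminus\mathbb{0},\le^* )=\mathfrak{c}$.
   Context: For $x,y\in\omega^\omega$, $x\le^* y$ means $x(n)\le y(n)$ for all but finitely many $n$. For a poset (or preorder) $(P,\le)$, an antichain is a subset whose elements are pairwise incomparable (neither $p\le q$ nor $q\le p$ for distinct members), and $\mathfrak{mac}(P)$ is the minimal cardinality of a maximal (with respect to inclusion) antichain of $P$. $\mathfrak{c}=2^{\aleph_0}$. *)

theory Defs
  imports Main "HOL-Library.Equipollence"
begin

definition le_star :: "(nat \<Rightarrow> nat) \<Rightarrow> (nat \<Rightarrow> nat) \<Rightarrow> bool" where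
  "le_star x y \<longleftrightarrow> finite {n. \<not> x n \<le> y n}"

definition eventually_zero :: "(nat \<Rightarrow> nat) set" where
  "eventually_zero = {x. finite {n. x n \<noteq> 0}}"

definition is_antichain :: "'a set \<Rightarrow> ('a \<Rightarrow> 'a \<Rightarrow> bool) \<Rightarrow> 'a set \<Rightarrow> bool" where
  "is_antichain P le A \<longleftrightarrow> A \<subseteq> P \<and>
     (\<forall>x\<in>A. \<forall>y\<in>A. x \<noteq> y \<longrightarrow> \<not> le x y \<and> \<not> le y x)"

definition is_maximal_antichain :: "'a set \<Rightarrow> ('a \<Rightarrow> 'a \<Rightarrow> bool) \<Rightarrow> 'a set \<Rightarrow> bool" where
  "is_maximal_antichain P le A \<longleftrightarrow> is_antichain P le A \<and>
     (\<forall>B. is_antichain P le B \<and> A \<subseteq> B \<longrightarrow> B = A)"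

end

theory Submission
  imports Defs "HOL-Library.Countable"
begin

definition pref :: "nat set \<Rightarrow> nat \<Rightarrow> nat" where
  "pref X m = to_nat (map (\<lambda>i. i \<in> X) [0..<m])"

definition PP :: "nat set \<Rightarrow> nat set" where
  "PP X = range (pref X)"

lemma pref_eq: "pref X m = pref Y m' \<Longrightarrow> m = m' \<and> (\<forall>i<m. i \<in> X \<longleftrightarrow> i \<in> Y)"
proof -
  assume "pref X m = pref Y m'"
  then have h: "map (\<lambda>i. i \<in> X) [0..<m] = map (\<lambda>i. i \<in> Y) [0..<m']"
    unfolding pref_def by simp
  then have "m = m'" by (metis length_map length_upt minus_nat.diff_0)
  moreover have "\<forall>i<m. i \<in> X \<longleftrightarrow> i \<in> Y"
  proof (intro allI impI)
    fix i assume "i < m"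
    then have "map (\<lambda>i. i \<in> X) [0..<m] ! i = map (\<lambda>i. i \<in> Y) [0..<m'] ! i" using h by simp
    then show "i \<in> X \<longleftrightarrow> i \<in> Y" using \<open>i < m\<close> \<open>m = m'\<close> by simp
  qed
  ultimately show ?thesis by blast
qed

lemma PP_infinite: "infinite (PP X)"
proof -
  have "inj (pref X)" by (intro injI) (use pref_eq in blast)
  then show ?thesis unfolding PP_def using range_inj_infinite by blast
qed

lemma PP_ad: assumes "X \<noteq> Y" shows "finite (PP X \<inter> PP Y)"
proof -
  obtain k where k: "\<not> (k \<in> X \<longleftrightarrow> k \<in> Y)" using assms by blast
  have "PP X \<inter> PP Y \<subseteq> pref X ` {..k}"
  proof
    fix z assume "z \<in> PP X \<inter> PP Y"
    then obtain m m' where "z = pref X m" "z = pref Y m'" unfolding PP_def by blast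
    then have "m \<le> k" using pref_eq[of X m Y m'] k by (metis not_le)
    then show "z \<in> pref X ` {..k}" using \<open>z = pref X m\<close> by blast
  qed
  then show ?thesis by (meson finite_atMost finite_imageI finite_subset)
qed

lemma le_star_refl: "le_star x x" unfolding le_star_def by simp

lemma le_star_trans: "le_star x y \<Longrightarrow> le_star y z \<Longrightarrow> le_star x z"
  unfolding le_star_def
  by (rule finite_subset[of _ "{n. \<not> x n \<le> y n} \<union> {n. \<not> y n \<le> z n}"]) auto

lemma comparable_exists:
  assumes M: "is_maximal_antichain P le A" and R: "\<And>x. le x x" and y: "y \<in> P"
  shows "\<exists>b\<in>A. le y b \<or> le b y"
proof (cases "y \<in> A")
  case True then show ?thesis using R by blast
next
  case False
  have AC: "is_antichain P le A" using M unfolding is_maximal_antichain_def by blast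
  have "\<not> is_antichain P le (insert y A)"
  proof
    assume "is_antichain P le (insert y A)"
    then have "insert y A = A" using M unfolding is_maximal_antichain_def by blast
    then show False using False by blast
  qed
  then show ?thesis using AC y unfolding is_antichain_def by blast
qed

theorem mainTheorem3:
  assumes "is_maximal_antichain (UNIV - eventually_zero) le_star A"
  shows "A \<approx> (UNIV :: nat set set)"
proof (rule lepoll_antisym)
  have AC: "is_antichain (UNIV - eventually_zero) le_star A"
    using assms unfolding is_maximal_antichain_def by blast
  have anti: "\<And>x z. x \<in> A \<Longrightarrow> z \<in> A \<Longrightarrow> le_star x z \<Longrightarrow> x = z"
    using AC unfolding is_antichain_def by blast
  have "A \<lesssim> (UNIV :: (nat \<Rightarrow> nat) set)" by (simp add: subset_imp_lepoll)
  also have "(UNIV :: (nat \<Rightarrow> nat) set) \<lesssim> (UNIV :: nat set set)"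
  proof -
    have "inj (\<lambda>f::nat\<Rightarrow>nat. range (\<lambda>n. prod_encode (n, f n)))"
    proof (rule injI)
      fix f g :: "nat \<Rightarrow> nat"
      assume h: "range (\<lambda>n. prod_encode (n, f n)) = range (\<lambda>n. prod_encode (n, g n))"
      show "f = g"
      proof
        fix n
        have "prod_encode (n, f n) \<in> range (\<lambda>n. prod_encode (n, g n))" using h by blast
        then obtain m where "prod_encode (n, f n) = prod_encode (m, g m)" by blast
        then have "(n, f n) = (m, g m)" using inj_prod_encode by (meson injD)
        then show "f n = g n" by auto
      qed
    qed
    then show ?thesis unfolding lepoll_def by blast
  qed
  finally show "A \<lesssim> (UNIV :: nat set set)" .
  define one :: "nat \<Rightarrow> nat" where "one = (\<lambda>n. 1)"
  have one_P: "one \<notin> eventually_zero" unfolding one_def eventually_zero_def by simp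
  have "A \<noteq> {}"
  proof
    assume "A = {}"
    have "is_antichain (UNIV - eventually_zero) le_star {one}"
      unfolding is_antichain_def using one_P by simp
    then have "{one} = A" using assms \<open>A = {}\<close> unfolding is_maximal_antichain_def by blast
    then show False using \<open>A = {}\<close> by simp
  qed
  then obtain a where aA: "a \<in> A" by blast
  then have "a \<notin> eventually_zero" using AC unfolding is_antichain_def by blast
  then have Sinf: "infinite {n. a n \<noteq> 0}" unfolding eventually_zero_def by simp
  define S where "S = {n. a n \<noteq> 0}"
  define e where "e = enumerate S"
  have eS: "\<And>n. a (e n) \<noteq> 0" using enumerate_in_set[OF Sinf] unfolding e_def S_def by simp
  have einj: "inj e" using strict_mono_enumerate[OF Sinf] strict_mono_imp_inj_on unfolding e_def S_def by blast
  define Z where "Z X = (\<lambda>k. e (2*k)) ` PP X" for X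
  define W where "W X = (\<lambda>k. e (2*k+1)) ` PP X" for X
  have injZ: "inj (\<lambda>k. e (2*k))" using einj by (auto simp: inj_def) (metis mult_left_cancel zero_neq_numeral)
  have injW: "inj (\<lambda>k. e (2*k+1))" using einj by (auto simp: inj_def) (metis Suc_inject mult_left_cancel zero_neq_numeral)
  have ZW: "\<And>X Y. Z X \<inter> W Y = {}" unfolding Z_def W_def using einj
    by (auto simp: inj_def) (metis even_Suc even_mult_iff even_numeral)
  have Zinf: "\<And>X. infinite (Z X)" unfolding Z_def using PP_infinite injZ
    by (metis finite_imageD inj_on_subset subset_UNIV)
  have Winf: "\<And>X. infinite (W X)" unfolding W_def using PP_infinite injW
    by (metis finite_imageD inj_on_subset subset_UNIV)
  have ZZ: "\<And>X Y. X \<noteq> Y \<Longrightarrow> finite (Z X \<inter> Z Y)" unfolding Z_def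
    using PP_ad injZ by (metis finite_imageI image_Int)
  have WW: "\<And>X Y. X \<noteq> Y \<Longrightarrow> finite (W X \<inter> W Y)" unfolding W_def
    using PP_ad injW by (metis finite_imageI image_Int)
  have Wpos: "\<And>X n. n \<in> W X \<Longrightarrow> a n \<noteq> 0" unfolding W_def using eS by auto
  define y where "y X n = (if n \<in> Z X then a n + 1 else if n \<in> W X then a n - 1 else a n)" for X n
  have yZ: "\<And>X n. n \<in> Z X \<Longrightarrow> y X n = a n + 1" unfolding y_def by simp
  have yW: "\<And>X n. n \<in> W X \<Longrightarrow> y X n = a n - 1" unfolding y_def using ZW by auto
  have yO: "\<And>X n. n \<notin> Z X \<Longrightarrow> n \<notin> W X \<Longrightarrow> y X n = a n" unfolding y_def by simp
  have yP: "\<And>X. y X \<in> UNIV - eventually_zero"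
  proof -
    fix X
    have "Z X \<subseteq> {n. y X n \<noteq> 0}" using yZ by auto
    then show "y X \<in> UNIV - eventually_zero" unfolding eventually_zero_def
      using Zinf finite_subset by blast
  qed
  have n1: "\<And>X. \<not> le_star (y X) a"
  proof -
    fix X
    have "Z X \<subseteq> {n. \<not> y X n \<le> a n}" using yZ by auto
    then show "\<not> le_star (y X) a" unfolding le_star_def using Zinf finite_subset by blast
  qed
  have n2: "\<And>X. \<not> le_star a (y X)"
  proof -
    fix X
    have "W X \<subseteq> {n. \<not> a n \<le> y X n}" using yW Wpos by fastforce
    then show "\<not> le_star a (y X)" unfolding le_star_def using Winf finite_subset by blast
  qed
  have n3: "\<And>X Y. X \<noteq> Y \<Longrightarrow> \<not> le_star (y X) (y Y)"
  proof -
    fix X Y :: "nat set" assume "X \<noteq> Y"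
    have "Z X - Z Y \<subseteq> {n. \<not> y X n \<le> y Y n}"
    proof
      fix n assume n: "n \<in> Z X - Z Y"
      then have "n \<notin> W Y" using ZW by blast
      then show "n \<in> {n. \<not> y X n \<le> y Y n}" using n yZ yO by auto
    qed
    moreover have "infinite (Z X - Z Y)"
    proof
      assume "finite (Z X - Z Y)"
      then have "finite ((Z X - Z Y) \<union> (Z X \<inter> Z Y))" using ZZ[OF \<open>X \<noteq> Y\<close>] by blast
      moreover have "(Z X - Z Y) \<union> (Z X \<inter> Z Y) = Z X" by blast
      ultimately show False using Zinf by simp
    qed
    ultimately show "\<not> le_star (y X) (y Y)" unfolding le_star_def using finite_subset by blast
  qed
  have up: "\<And>X Y b. X \<noteq> Y \<Longrightarrow> le_star (y X) b \<Longrightarrow> le_star (y Y) b \<Longrightarrow> le_star a b"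
  proof -
    fix X Y :: "nat set" and b assume "X \<noteq> Y" "le_star (y X) b" "le_star (y Y) b"
    have "{n. \<not> a n \<le> b n} \<subseteq> {n. \<not> y X n \<le> b n} \<union> {n. \<not> y Y n \<le> b n} \<union> (W X \<inter> W Y)"
    proof
      fix n assume n: "n \<in> {n. \<not> a n \<le> b n}"
      have "n \<notin> W X \<Longrightarrow> a n \<le> y X n" using yZ yO by (cases "n \<in> Z X") auto
      moreover have "n \<notin> W Y \<Longrightarrow> a n \<le> y Y n" using yZ yO by (cases "n \<in> Z Y") auto
      ultimately show "n \<in> {n. \<not> y X n \<le> b n} \<union> {n. \<not> y Y n \<le> b n} \<union> (W X \<inter> W Y)"
        using n le_trans by blast
    qed
    then show "le_star a b" unfolding le_star_def
      using WW[OF \<open>X \<noteq> Y\<close>] \<open>le_star (y X) b\<close> \<open>le_star (y Y) b\<close>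
      unfolding le_star_def by (meson finite_Un finite_subset)
  qed
  have down: "\<And>X Y b. X \<noteq> Y \<Longrightarrow> le_star b (y X) \<Longrightarrow> le_star b (y Y) \<Longrightarrow> le_star b a"
  proof -
    fix X Y :: "nat set" and b assume "X \<noteq> Y" "le_star b (y X)" "le_star b (y Y)"
    have "{n. \<not> b n \<le> a n} \<subseteq> {n. \<not> b n \<le> y X n} \<union> {n. \<not> b n \<le> y Y n} \<union> (Z X \<inter> Z Y)"
    proof
      fix n assume n: "n \<in> {n. \<not> b n \<le> a n}"
      have "n \<notin> Z X \<Longrightarrow> y X n \<le> a n" using yW yO by (cases "n \<in> W X") auto
      moreover have "n \<notin> Z Y \<Longrightarrow> y Y n \<le> a n" using yW yO by (cases "n \<in> W Y") auto
      ultimately show "n \<in> {n. \<not> b n \<le> y X n} \<union> {n. \<not> b n \<le> y Y n} \<union> (Z X \<inter> Z Y)"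
        using n le_trans by blast
    qed
    then show "le_star b a" unfolding le_star_def
      using ZZ[OF \<open>X \<noteq> Y\<close>] \<open>le_star b (y X)\<close> \<open>le_star b (y Y)\<close>
      unfolding le_star_def by (meson finite_Un finite_subset)
  qed
  have "\<forall>X. \<exists>b\<in>A. le_star (y X) b \<or> le_star b (y X)"
    using comparable_exists[OF assms le_star_refl yP] by blast
  then obtain bb where bb: "\<And>X. bb X \<in> A" "\<And>X. le_star (y X) (bb X) \<or> le_star (bb X) (y X)"
    by metis
  have "inj bb"
  proof (rule injI, rule ccontr)
    fix X Y assume eq: "bb X = bb Y" and ne: "X \<noteq> Y"
    consider "le_star (y X) (bb X)" "le_star (y Y) (bb X)"
      | "le_star (bb X) (y X)" "le_star (bb X) (y Y)"
      | "le_star (y X) (bb X)" "le_star (bb X) (y Y)"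
      | "le_star (bb X) (y X)" "le_star (y Y) (bb X)"
      using bb(2)[of X] bb(2)[of Y] eq by metis
    then show False
    proof cases
      case 1
      then have "le_star a (bb X)" using up ne by blast
      then have "a = bb X" using anti aA bb(1) by blast
      then show False using 1 n1 by metis
    next
      case 2
      then have "le_star (bb X) a" using down ne by blast
      then have "a = bb X" using anti aA bb(1) by metis
      then show False using 2 n2 by metis
    next
      case 3 then show False using n3 ne le_star_trans by blast
    next
      case 4 then show False using n3 ne le_star_trans by metis
    qed
  qed
  then show "(UNIV :: nat set set) \<lesssim> A" unfolding lepoll_def using bb(1) by blast
qed

end
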